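(* Let $u\in\{A,B,C\}^{\mathbb N}$ be a 3iet word with parameters $\varepsilon,\ell$, and let $\varepsilon=[0,a_1,a_2,\dots]$ be the continued fraction expansion of $\varepsilon$. Then $$ {\rm ind}(u)<+\infty \qquad\iff\qquad \sup_{n\in\mathbb N} a_n < +\infty\,. $$
   Context: Parameters $\varepsilon,\ell$ satisfy $\varepsilon\in(0,1)\setminus\mathbb Q$ and $\max\{\varepsilon,1-\varepsilon\}<\ell<1$. The three interval exchange $T_{\varepsilon,\ell}:[0,\ell)\to[0,\ell)$ is defined by $T_{\varepsilon,\ell}(x)=x+1-\varepsilon$ for $x\in I_A:=[0,\ell-1+\varepsilon)$, $T_{\varepsilon,\ell}(x)=x+1-2\varepsilon$ for $x\in I_B:=[\ell-1+\varepsilon,\varepsilon)$, and $T_{\varepsilon,\ell}(x)=x-\varepsilon$ for $x\in I_C:=[\varepsilon,\ell)$. A 3iet word with parameters $\varepsilon,\ell$ is the word $u=(u_n)_{n\in\mathbb N}$ over $\{A,B,C\}$ with $u_n=X$ iff $T_{\varepsilon,\ell}^n(x_0)\in I_X$, for some $x_0\in[0,\ell)$; its language and index do not depend on $x_0$. A word $v$ is a power $w^r$ ($r=|v|/|w|$) if $|v|\ge|w|$ and $v$ is a prefix of $www\cdots$; ${\rm ind}(w)=\sup\{r\in\mathbb Q: w^r \text{ is a factor of } u\}$ and ${\rm ind}(u)=\sup\{{\rm ind}(w): w \text{ a factor of } u\}$. *)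

theory Defs
  imports Complex_Main "HOL-Library.Extended_Real"
begin

datatype letter = A | B | C

definition T3 :: "real \<Rightarrow> real \<Rightarrow> real \<Rightarrow> real" where
  "T3 eps l x =
     (if x < l - 1 + eps then x + 1 - eps
      else if x < eps then x + 1 - 2 * eps
      else x - eps)"

definition coding :: "real \<Rightarrow> real \<Rightarrow> real \<Rightarrow> letter" where
  "coding eps l x =
     (if 0 \<le> x \<and> x < l - 1 + eps then A
      else if l - 1 + eps \<le> x \<and> x < eps then B
      else C)"

definition iet3_word :: "real \<Rightarrow> real \<Rightarrow> real \<Rightarrow> nat \<Rightarrow> letter" where
  "iet3_word eps l x0 n = coding eps l ((T3 eps l ^^ n) x0)"

definition is_factor :: "'a list \<Rightarrow> (nat \<Rightarrow> 'a) \<Rightarrow> bool" where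
  "is_factor v u \<longleftrightarrow> (\<exists>i. v = map u [i..<i + length v])"

text \<open>v is a power w^r with r = |v|/|w|: |v| \<ge> |w| and v is a prefix of www...\<close>
definition is_power_of :: "'a list \<Rightarrow> 'a list \<Rightarrow> bool" where
  "is_power_of v w \<longleftrightarrow> w \<noteq> [] \<and> length w \<le> length v \<and>
      (\<forall>k < length v. v ! k = w ! (k mod length w))"

definition word_index :: "'a list \<Rightarrow> (nat \<Rightarrow> 'a) \<Rightarrow> ereal" where
  "word_index w u = Sup {ereal (real (length v) / real (length w)) | v.
       is_power_of v w \<and> is_factor v u}"

definition index :: "(nat \<Rightarrow> 'a) \<Rightarrow> ereal" where
  "index u = Sup {word_index w u | w. w \<noteq> [] \<and> is_factor w u}"

text \<open>Continued fraction expansion eps = [0; a1, a2, ...] via the Gauss map.\<close>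
fun cf_rem :: "real \<Rightarrow> nat \<Rightarrow> real" where
  "cf_rem x 0 = x"
| "cf_rem x (Suc n) = frac (1 / cf_rem x n)"

definition cf_digit :: "real \<Rightarrow> nat \<Rightarrow> nat" where
  "cf_digit x n = (if n = 0 then nat \<lfloor>x\<rfloor> else nat \<lfloor>1 / cf_rem x (n - 1)\<rfloor>)"

end

theory Submission
  imports Defs "HOL-Analysis.Analysis"
begin


fun QQ :: "real \<Rightarrow> nat \<Rightarrow> int" where
  "QQ x 0 = 0" | "QQ x (Suc 0) = 1"
| "QQ x (Suc (Suc n)) = int (cf_digit x (Suc n)) * QQ x (Suc n) + QQ x n"

fun PP :: "real \<Rightarrow> nat \<Rightarrow> int" where
  "PP x 0 = 1" | "PP x (Suc 0) = 0"
| "PP x (Suc (Suc n)) = int (cf_digit x (Suc n)) * PP x (Suc n) + PP x n"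

locale irr =
  fixes e :: real
  assumes e0: "0 < e" and e1: "e < 1" and irr: "e \<notin> \<rat>"
begin

abbreviation "r \<equiv> cf_rem e"
abbreviation "a \<equiv> cf_digit e"
abbreviation "Q \<equiv> QQ e"
abbreviation "P \<equiv> PP e"
definition d :: "nat \<Rightarrow> real" where "d n = of_int (Q n) * e - of_int (P n)"

lemma r_props: "0 < r n \<and> r n < 1 \<and> r n \<notin> \<rat>"
proof (induction n)
  case 0
  then show ?case using e0 e1 irr by simp
next
  case (Suc n)
  define x where "x = 1 / r n"
  have xq: "x \<notin> \<rat>"
  proof
    assume "x \<in> \<rat>"
    then have "1 / x \<in> \<rat>" by simp
    then show False using Suc x_def by simp
  qed
  have fq: "frac x \<notin> \<rat>"
  proof
    assume h: "frac x \<in> \<rat>"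
    have "x = frac x + of_int \<lfloor>x\<rfloor>" by (simp add: frac_def)
    also have "\<dots> \<in> \<rat>" using h by simp
    finally show False using xq by simp
  qed
  have "frac x \<noteq> 0"
  proof
    assume "frac x = 0"
    then have "x \<in> \<int>" by (simp add: frac_eq_0_iff)
    then have "x \<in> \<rat>" using Ints_subset_Rats by blast
    then show False using xq by simp
  qed
  moreover have "frac x \<ge> 0" "frac x < 1" by (auto simp: frac_lt_1)
  ultimately show ?case using fq by (simp add: x_def)
qed

lemma r_pos: "0 < r n" and r_lt1: "r n < 1" using r_props by auto

lemma a_Suc: "real (a (Suc n)) = of_int \<lfloor>1 / r n\<rfloor>"
proof -
  have "1 / r n > 1" using r_pos[of n] r_lt1[of n] by simp
  then have h: "\<lfloor>1 / r n\<rfloor> \<ge> 0" by linarith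
  have "a (Suc n) = nat \<lfloor>1 / r n\<rfloor>" by (simp add: cf_digit_def)
  then show ?thesis using h by simp
qed

lemma a_ge1: "a (Suc n) \<ge> 1"
proof -
  have "1 / r n > 1" using r_pos[of n] r_lt1[of n] by simp
  then have h: "\<lfloor>1 / r n\<rfloor> \<ge> 1" by linarith
  have "a (Suc n) = nat \<lfloor>1 / r n\<rfloor>" by (simp add: cf_digit_def)
  then show ?thesis using h by (metis nat_mono nat_one_as_int)
qed

lemma inv_r: "1 / r n = real (a (Suc n)) + r (Suc n)"
  by (simp add: a_Suc frac_def)

lemma a0: "a 0 = 0"
  using e0 e1 by (simp add: cf_digit_def)

lemma d_Suc: "d (Suc n) = - d n * r n"
proof (induction n)
  case 0
  then show ?case by (simp add: d_def)
next
  case (Suc n)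
  have rec: "d (Suc (Suc n)) = real (a (Suc n)) * d (Suc n) + d n"
    by (simp add: d_def algebra_simps)
  have rn: "r n > 0" using r_pos by simp
  have dn: "d n = - d (Suc n) / r n" using Suc rn by simp
  have ha: "real (a (Suc n)) = 1 / r n - r (Suc n)" using inv_r[of n] by simp
  show ?case unfolding rec dn ha using rn
    by (simp add: field_simps)
qed

lemma det: "Q (Suc n) * P n - Q n * P (Suc n) = (-1) ^ n"
proof (induction n)
  case 0
  then show ?case by simp
next
  case (Suc n)
  then show ?case by (simp add: algebra_simps)
qed

lemma Q_nonneg: "Q n \<ge> 0 \<and> Q (Suc n) \<ge> 1 \<and> Q n \<le> Q (Suc n)"
proof (induction n)
  case 0
  then show ?case by simp
next
  case (Suc n)
  have "int (a (Suc n)) \<ge> 1" using a_ge1[of n] by simp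
  then have "int (a (Suc n)) * Q (Suc n) \<ge> 1 * Q (Suc n)" using Suc
    by (intro mult_right_mono) auto
  moreover have "Q (Suc (Suc n)) = int (a (Suc n)) * Q (Suc n) + Q n" by simp
  ultimately show ?case using Suc by (intro conjI; linarith)
qed

lemma Q_ge0: "Q n \<ge> 0" and Q_ge1: "Q (Suc n) \<ge> 1" and Q_mono: "Q n \<le> Q (Suc n)"
  using Q_nonneg by auto

lemma Q_step2: "Q (Suc (Suc (Suc n))) \<ge> Q (Suc n) + 1"
proof -
  have "int (a (Suc (Suc n))) * Q (Suc (Suc n)) \<ge> 1"
    using a_ge1[of "Suc n"] Q_ge1[of "Suc n"]
    by (metis mult_le_cancel_right1 of_nat_1 of_nat_le_iff order.trans zero_le_one linorder_not_le)
  then show ?thesis by simp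
qed

lemma Q_grow: "Q (Suc (2 * k)) \<ge> int k + 1"
proof (induction k)
  case 0 then show ?case by simp
next
  case (Suc k)
  have "Q (Suc (2 * Suc k)) = Q (Suc (Suc (Suc (2*k))))" by simp
  also have "\<dots> \<ge> Q (Suc (2*k)) + 1" by (rule Q_step2)
  finally show ?case using Suc by simp
qed

lemma d_nonzero: "d n \<noteq> 0"
proof (induction n)
  case 0 then show ?case by (simp add: d_def)
next
  case (Suc n) then show ?case using d_Suc r_pos[of n] by simp
qed

lemma d_dec: "\<bar>d (Suc n)\<bar> < \<bar>d n\<bar>"
  using d_Suc[of n] r_pos[of n] r_lt1[of n] d_nonzero[of n]
  by (simp add: abs_mult)

lemma d_sign: "d n * d (Suc n) < 0"
proof -
  have "d n * d (Suc n) = - (d n * d n) * r n" using d_Suc by simp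
  moreover have "d n * d n > 0" using d_nonzero[of n] by (auto simp: zero_less_mult_iff)
  ultimately show ?thesis using r_pos[of n] by (simp add: mult_pos_pos)
qed

lemma key_id: "real_of_int (Q (Suc n)) * \<bar>d n\<bar> + real_of_int (Q n) * \<bar>d (Suc n)\<bar> = 1"
proof -
  have s: "real_of_int (Q (Suc n)) * d n - real_of_int (Q n) * d (Suc n) = - ((-1) ^ n)"
  proof -
    have "real_of_int (Q (Suc n)) * d n - real_of_int (Q n) * d (Suc n)
        = - real_of_int (Q (Suc n) * P n - Q n * P (Suc n))"
      by (simp add: d_def algebra_simps)
    then show ?thesis using det[of n] by simp
  qed
  have q0: "real_of_int (Q n) \<ge> 0" "real_of_int (Q (Suc n)) \<ge> 0" using Q_ge0 Q_ge1[of n] by auto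
  have "\<bar>real_of_int (Q (Suc n)) * d n - real_of_int (Q n) * d (Suc n)\<bar> = 1"
    using s by simp
  moreover have "\<bar>real_of_int (Q (Suc n)) * d n - real_of_int (Q n) * d (Suc n)\<bar>
      = real_of_int (Q (Suc n)) * \<bar>d n\<bar> + real_of_int (Q n) * \<bar>d (Suc n)\<bar>"
  proof (cases "d n > 0")
    case True
    then have "d (Suc n) < 0" using d_sign[of n] by (simp add: mult_less_0_iff)
    have "real_of_int (Q (Suc n)) * d n \<ge> 0" using True q0 by simp
    moreover have "real_of_int (Q n) * d (Suc n) \<le> 0" using \<open>d (Suc n) < 0\<close> q0
      by (simp add: mult_nonneg_nonpos)
    ultimately show ?thesis using True \<open>d (Suc n) < 0\<close> by simp
  next
    case False
    then have "d n < 0" using d_nonzero[of n] by simp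
    then have "d (Suc n) > 0" using d_sign[of n] by (simp add: mult_less_0_iff)
    have "real_of_int (Q (Suc n)) * d n \<le> 0" using \<open>d n < 0\<close> q0
      by (simp add: mult_nonneg_nonpos)
    moreover have "real_of_int (Q n) * d (Suc n) \<ge> 0" using \<open>d (Suc n) > 0\<close> q0 by simp
    ultimately show ?thesis using \<open>d n < 0\<close> \<open>d (Suc n) > 0\<close> by simp
  qed
  ultimately show ?thesis by simp
qed

lemma d_upper: "\<bar>d n\<bar> \<le> 1 / real_of_int (Q (Suc n))"
proof -
  have "real_of_int (Q n) * \<bar>d (Suc n)\<bar> \<ge> 0" using Q_ge0 by simp
  then have "real_of_int (Q (Suc n)) * \<bar>d n\<bar> \<le> 1" using key_id[of n] by linarith
  moreover have "real_of_int (Q (Suc n)) > 0" using Q_ge1[of n] by simp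
  ultimately show ?thesis by (simp add: field_simps)
qed

lemma d_upper': "\<bar>d n\<bar> * real_of_int (Q (Suc n)) \<le> 1"
proof -
  have "real_of_int (Q n) * \<bar>d (Suc n)\<bar> \<ge> 0" using Q_ge0 by simp
  moreover have "\<bar>d n\<bar> * real_of_int (Q (Suc n)) = real_of_int (Q (Suc n)) * \<bar>d n\<bar>"
    by (rule mult.commute)
  ultimately show ?thesis using key_id[of n] by linarith
qed

lemma d_lower: "\<bar>d n\<bar> \<ge> 1 / real_of_int (Q (Suc n) + Q n)"
proof -
  have "real_of_int (Q n) * \<bar>d (Suc n)\<bar> \<le> real_of_int (Q n) * \<bar>d n\<bar>"
    using Q_ge0[of n] d_dec[of n] by (simp add: mult_left_mono)
  then have "real_of_int (Q (Suc n) + Q n) * \<bar>d n\<bar> \<ge> 1" using key_id[of n]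
    by (simp add: algebra_simps)
  moreover have "real_of_int (Q (Suc n) + Q n) > 0" using Q_ge1[of n] Q_ge0[of n] by simp
  ultimately show ?thesis by (simp add: field_simps)
qed


lemma sigma_sq: "((-1::int) ^ n) * (-1) ^ n = 1"
proof -
  have "((-1::int) ^ n) * (-1) ^ n = ((-1) * (-1)) ^ n" by (simp add: power_mult_distrib)
  then show ?thesis by simp
qed

lemma covering:
  fixes y :: real
  shows "\<exists>j::nat. \<exists>k::int. int j < Q n + Q (Suc n) \<and> \<bar>real j * e - real_of_int k - y\<bar> < \<bar>d n\<bar>"
proof -
  define \<sigma> :: int where "\<sigma> = (-1) ^ n"
  have ss: "real_of_int \<sigma> * real_of_int \<sigma> = 1"
    using sigma_sq[of n] unfolding \<sigma>_def by (metis of_int_1 of_int_mult)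
  have detr: "real_of_int (Q n) * d (Suc n) - real_of_int (Q (Suc n)) * d n = real_of_int \<sigma>"
  proof -
    have "real_of_int (Q n) * d (Suc n) - real_of_int (Q (Suc n)) * d n
        = real_of_int (Q (Suc n) * P n - Q n * P (Suc n))"
      by (simp add: d_def algebra_simps)
    then show ?thesis using det[of n] by (simp add: \<sigma>_def)
  qed
  define \<alpha> where "\<alpha> = - real_of_int (Q (Suc n)) * y * real_of_int \<sigma>"
  define \<beta> where "\<beta> = real_of_int (Q n) * y * real_of_int \<sigma>"
  have e1: "\<alpha> * real_of_int (Q n) + \<beta> * real_of_int (Q (Suc n)) = 0"
    by (simp add: \<alpha>_def \<beta>_def algebra_simps)
  have e2: "\<alpha> * d n + \<beta> * d (Suc n) = y"
  proof -
    have "\<alpha> * d n + \<beta> * d (Suc n) = y * real_of_int \<sigma> *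
        (real_of_int (Q n) * d (Suc n) - real_of_int (Q (Suc n)) * d n)"
      by (simp add: \<alpha>_def \<beta>_def algebra_simps)
    also have "\<dots> = y" using detr ss by simp
    finally show ?thesis .
  qed
  define i1 where "i1 = \<lceil>\<alpha>\<rceil>"
  define i2 where "i2 = \<lceil>\<beta>\<rceil>"
  define a' where "a' = real_of_int i1 - \<alpha>"
  define b' where "b' = real_of_int i2 - \<beta>"
  have a'r: "0 \<le> a'" "a' < 1" unfolding a'_def i1_def by linarith+
  have b'r: "0 \<le> b'" "b' < 1" unfolding b'_def i2_def by linarith+
  define ji where "ji = i1 * Q n + i2 * Q (Suc n)"
  have jir: "real_of_int ji = a' * real_of_int (Q n) + b' * real_of_int (Q (Suc n))"
    using e1 by (simp add: ji_def a'_def b'_def algebra_simps)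
  have q0: "real_of_int (Q n) \<ge> 0" "real_of_int (Q (Suc n)) \<ge> 1"
    using Q_ge0[of n] Q_ge1[of n] by auto
  have "a' * real_of_int (Q n) \<ge> 0" "b' * real_of_int (Q (Suc n)) \<ge> 0"
    using a'r b'r q0 by auto
  then have ji0: "ji \<ge> 0" using jir by linarith
  have "a' * real_of_int (Q n) \<le> real_of_int (Q n)"
    using a'r q0 by (simp add: mult_left_le_one_le)
  moreover have "b' * real_of_int (Q (Suc n)) < real_of_int (Q (Suc n))"
    using b'r q0 by simp
  ultimately have "real_of_int ji < real_of_int (Q n + Q (Suc n))" using jir by simp
  then have jilt: "ji < Q n + Q (Suc n)" by linarith
  define k where "k = i1 * P n + i2 * P (Suc n)"
  have je: "real_of_int ji * e - real_of_int k = y + a' * d n + b' * d (Suc n)"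
  proof -
    have "real_of_int ji * e - real_of_int k = real_of_int i1 * d n + real_of_int i2 * d (Suc n)"
      by (simp add: ji_def k_def d_def algebra_simps)
    also have "\<dots> = (\<alpha> * d n + \<beta> * d (Suc n)) + a' * d n + b' * d (Suc n)"
      by (simp add: a'_def b'_def algebra_simps)
    finally show ?thesis using e2 by simp
  qed
  have small: "\<bar>a' * d n + b' * d (Suc n)\<bar> < \<bar>d n\<bar>"
  proof (cases "d n > 0")
    case True
    then have n1: "d (Suc n) < 0" using d_sign[of n] by (simp add: mult_less_0_iff)
    have "a' * d n < d n" using True a'r by simp
    moreover have "a' * d n \<ge> 0" using True a'r by simp
    moreover have "b' * d (Suc n) \<le> 0" using n1 b'r by (simp add: mult_nonneg_nonpos)
    moreover have "b' * d (Suc n) > d (Suc n)" using n1 b'r by simp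
    moreover have "\<bar>d (Suc n)\<bar> < \<bar>d n\<bar>" by (rule d_dec)
    ultimately show ?thesis using True n1 by linarith
  next
    case False
    then have n0: "d n < 0" using d_nonzero[of n] by simp
    then have n1: "d (Suc n) > 0" using d_sign[of n] by (simp add: mult_less_0_iff)
    have "a' * d n > d n" using n0 a'r by simp
    moreover have "a' * d n \<le> 0" using n0 a'r by (simp add: mult_nonneg_nonpos)
    moreover have "b' * d (Suc n) \<ge> 0" using n1 b'r by simp
    moreover have "b' * d (Suc n) < d (Suc n)" using n1 b'r by simp
    moreover have "\<bar>d (Suc n)\<bar> < \<bar>d n\<bar>" by (rule d_dec)
    ultimately show ?thesis using n0 n1 by linarith
  qed
  show ?thesis
  proof (intro exI conjI)
    show "int (nat ji) < Q n + Q (Suc n)" using ji0 jilt by simp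
    have "real (nat ji) = real_of_int ji" using ji0 by simp
    then show "\<bar>real (nat ji) * e - real_of_int k - y\<bar> < \<bar>d n\<bar>" using je small by simp
  qed
qed


lemma abs_add_same_sign: "(u::real) * v > 0 \<Longrightarrow> \<bar>u + v\<bar> = \<bar>u\<bar> + \<bar>v\<bar>"
  by (auto simp: zero_less_mult_iff)

lemma abs_ge_when: "\<bar>(i::int)\<bar> \<ge> 1 \<Longrightarrow> \<bar>real_of_int i * (x::real)\<bar> \<ge> \<bar>x\<bar>"
proof -
  assume h: "\<bar>i\<bar> \<ge> 1"
  then have "\<bar>real_of_int i\<bar> \<ge> 1" by linarith
  then have "\<bar>real_of_int i\<bar> * \<bar>x\<bar> \<ge> 1 * \<bar>x\<bar>" by (intro mult_right_mono) auto
  then show ?thesis by (simp add: abs_mult)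
qed

lemma best_approx:
  fixes s p :: int
  assumes s1: "s \<ge> 1" and slt: "s < Q (Suc n)"
  shows "\<bar>real_of_int s * e - real_of_int p\<bar> \<ge> \<bar>d n\<bar>"
proof -
  define \<sigma> :: int where "\<sigma> = (-1) ^ n"
  have ss: "\<sigma> * \<sigma> = 1" using sigma_sq[of n] unfolding \<sigma>_def by simp
  have dt: "Q (Suc n) * P n - Q n * P (Suc n) = \<sigma>" using det[of n] by (simp add: \<sigma>_def)
  define i1 where "i1 = - \<sigma> * (P (Suc n) * s - Q (Suc n) * p)"
  define i2 where "i2 = \<sigma> * (P n * s - Q n * p)"
  have hs: "s = i1 * Q n + i2 * Q (Suc n)"
  proof -
    have "i1 * Q n + i2 * Q (Suc n) = (\<sigma> * s) * (Q (Suc n) * P n - Q n * P (Suc n))"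
      by (simp add: i1_def i2_def algebra_simps)
    also have "\<dots> = (\<sigma> * \<sigma>) * s" using dt by simp
    finally show ?thesis using ss by simp
  qed
  have hp: "p = i1 * P n + i2 * P (Suc n)"
  proof -
    have "i1 * P n + i2 * P (Suc n) = (\<sigma> * p) * (Q (Suc n) * P n - Q n * P (Suc n))"
      by (simp add: i1_def i2_def algebra_simps)
    also have "\<dots> = (\<sigma> * \<sigma>) * p" using dt by simp
    finally show ?thesis using ss by simp
  qed
  have lin: "real_of_int s * e - real_of_int p = real_of_int i1 * d n + real_of_int i2 * d (Suc n)"
  proof -
    have "real_of_int s * e - real_of_int p = real_of_int (i1 * Q n + i2 * Q (Suc n)) * e
       - real_of_int (i1 * P n + i2 * P (Suc n))" using hs hp by simp
    also have "\<dots> = real_of_int i1 * d n + real_of_int i2 * d (Suc n)"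
      by (simp add: d_def algebra_simps)
    finally show ?thesis .
  qed
  have q0: "Q n \<ge> 0" "Q (Suc n) \<ge> 1" using Q_ge0[of n] Q_ge1[of n] by auto
  consider "i2 = 0" | "i1 = 0" | "i1 > 0 \<and> i2 > 0" | "i1 < 0 \<and> i2 < 0"
    | "i1 * i2 < 0" by (metis linorder_neqE_linordered_idom mult_neg_pos mult_pos_neg)
  then show ?thesis
  proof cases
    case 1
    then have si: "s = i1 * Q n" using hs by simp
    have "i1 \<ge> 1"
    proof (rule ccontr)
      assume "\<not> i1 \<ge> 1"
      then have "i1 \<le> 0" by simp
      then have "i1 * Q n \<le> 0" using q0 by (simp add: mult_nonpos_nonneg)
      then show False using si s1 by simp
    qed
    then have "\<bar>real_of_int i1 * d n\<bar> \<ge> \<bar>d n\<bar>" by (intro abs_ge_when) simp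
    then show ?thesis using lin 1 by simp
  next
    case 2
    then have si: "s = i2 * Q (Suc n)" using hs by simp
    have "i2 \<ge> 1"
    proof (rule ccontr)
      assume "\<not> i2 \<ge> 1"
      then have "i2 \<le> 0" by simp
      then have "i2 * Q (Suc n) \<le> 0" using q0 by (simp add: mult_nonpos_nonneg)
      then show False using si s1 by simp
    qed
    then have "i2 * Q (Suc n) \<ge> 1 * Q (Suc n)" using q0 by (intro mult_right_mono) auto
    then show ?thesis using slt si by simp
  next
    case 3
    then have "i1 * Q n \<ge> 0" using q0 by simp
    moreover have "i2 * Q (Suc n) \<ge> 1 * Q (Suc n)" using 3 q0 by (intro mult_right_mono) auto
    ultimately show ?thesis using hs slt by linarith
  next
    case 4
    then have "i1 * Q n \<le> 0" using q0 by (simp add: mult_nonpos_nonneg)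
    moreover have "i2 * Q (Suc n) < 0" using 4 q0 by (simp add: mult_neg_pos)
    ultimately show ?thesis using hs s1 by linarith
  next
    case 5
    have sg: "d n * d (Suc n) < 0" by (rule d_sign)
    have "(real_of_int i1 * d n) * (real_of_int i2 * d (Suc n))
        = real_of_int (i1 * i2) * (d n * d (Suc n))" by (simp add: algebra_simps)
    moreover have "real_of_int (i1 * i2) < 0" using 5 by linarith
    moreover have "real_of_int (i1 * i2) * (d n * d (Suc n)) > 0"
      using sg \<open>real_of_int (i1 * i2) < 0\<close> by (rule mult_neg_neg[rotated])
    ultimately have "(real_of_int i1 * d n) * (real_of_int i2 * d (Suc n)) > 0"
      by (metis (no_types, lifting))
    then have "\<bar>real_of_int i1 * d n + real_of_int i2 * d (Suc n)\<bar>
        = \<bar>real_of_int i1 * d n\<bar> + \<bar>real_of_int i2 * d (Suc n)\<bar>"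
      by (rule abs_add_same_sign)
    moreover have "i1 \<noteq> 0" using 5 by auto
    then have "\<bar>real_of_int i1 * d n\<bar> \<ge> \<bar>d n\<bar>" by (intro abs_ge_when) simp
    ultimately show ?thesis using lin by simp
  qed
qed

lemma Q_unbounded: "\<exists>n. Q n > (Bd::int)"
proof -
  have "Q (Suc (2 * nat (Bd + 1))) \<ge> int (nat (Bd + 1)) + 1" by (rule Q_grow)
  then show ?thesis by (intro exI[of _ "Suc (2 * nat (Bd + 1))"]) linarith
qed

lemma d_small: "\<epsilon> > 0 \<Longrightarrow> \<exists>n. \<bar>d n\<bar> < \<epsilon>"
proof -
  assume ep: "\<epsilon> > 0"
  obtain n0 where n0: "Q n0 > \<lceil>1 / \<epsilon>\<rceil>"
    using Q_unbounded[of "\<lceil>1 / \<epsilon>\<rceil>"] by blast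
  define n where "n = n0"
  have n: "Q (Suc n) > \<lceil>1 / \<epsilon>\<rceil>" using n0 Q_mono[of n0] unfolding n_def by linarith
  then have "real_of_int (Q (Suc n)) > 1 / \<epsilon>" by linarith
  moreover have q0: "real_of_int (Q (Suc n)) > 0" using Q_ge1[of n] by simp
  ultimately have "1 < real_of_int (Q (Suc n)) * \<epsilon>" using ep by (simp add: pos_divide_less_eq)
  then have "1 / real_of_int (Q (Suc n)) < \<epsilon>" using q0 by (simp add: pos_divide_less_eq mult.commute)
  then show ?thesis using d_upper[of n] by (intro exI[of _ n]) linarith
qed

lemma d_unb: "\<bar>d (Suc m)\<bar> * real (a (Suc m)) * real_of_int (Q (Suc m)) \<le> 1"
proof -
  have q1: "real_of_int (Q (Suc m)) \<ge> 1" using Q_ge1[of m] by simp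
  have "Q (Suc (Suc m)) \<ge> int (a (Suc m)) * Q (Suc m)" using Q_ge0[of m] by simp
  then have "real_of_int (int (a (Suc m)) * Q (Suc m)) \<le> real_of_int (Q (Suc (Suc m)))"
    by (simp only: of_int_le_iff)
  then have h: "real_of_int (Q (Suc (Suc m))) \<ge> real (a (Suc m)) * real_of_int (Q (Suc m))"
    by simp
  have "\<bar>d (Suc m)\<bar> * real_of_int (Q (Suc (Suc m))) \<le> 1"
    by (rule d_upper')
  moreover have "\<bar>d (Suc m)\<bar> * (real (a (Suc m)) * real_of_int (Q (Suc m)))
      \<le> \<bar>d (Suc m)\<bar> * real_of_int (Q (Suc (Suc m)))"
    using h by (intro mult_left_mono) auto
  ultimately show ?thesis by (simp add: mult.assoc)
qed

lemma Q_step_bound: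
  assumes M: "\<And>k. a k \<le> M"
  shows "Q (Suc (Suc n)) \<le> int (M + 1) * Q (Suc n)"
proof -
  have "int (a (Suc n)) * Q (Suc n) \<le> int M * Q (Suc n)"
    using M[of "Suc n"] Q_ge0[of "Suc n"] by (intro mult_right_mono) auto
  then show ?thesis using Q_mono[of n] by (simp add: algebra_simps)
qed

lemma bad_approx:
  fixes S p :: int
  assumes M: "\<And>k. a k \<le> M" and S1: "S \<ge> 1"
  shows "\<bar>real_of_int S * e - real_of_int p\<bar> \<ge> 1 / (real (M + 2) * real_of_int S)"
proof -
  have ex: "\<exists>k. S < Q (Suc k)"
  proof -
    obtain k where "Q k > S" using Q_unbounded[of S] by blast
    then show ?thesis using Q_mono[of k] by (intro exI[of _ k]) linarith
  qed
  define N where "N = (LEAST k. S < Q (Suc k))"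
  have N1: "S < Q (Suc N)" unfolding N_def using ex by (rule LeastI_ex)
  have "N \<noteq> 0"
  proof
    assume "N = 0" then show False using N1 S1 by simp
  qed
  then obtain n where Nn: "N = Suc n" by (cases N) auto
  have "n < N" using Nn by simp
  then have "\<not> S < Q (Suc n)" unfolding N_def by (rule not_less_Least)
  then have Sge: "Q (Suc n) \<le> S" by simp
  have F1: "\<bar>real_of_int S * e - real_of_int p\<bar> \<ge> \<bar>d (Suc n)\<bar>"
    using best_approx[OF S1, of "Suc n" p] N1 Nn by simp
  have F2: "\<bar>d (Suc n)\<bar> \<ge> 1 / real_of_int (Q (Suc (Suc n)) + Q (Suc n))"
    by (rule d_lower)
  have "Q (Suc (Suc n)) + Q (Suc n) \<le> int (M + 2) * S"
  proof -
    have "Q (Suc (Suc n)) + Q (Suc n) \<le> int (M + 2) * Q (Suc n)"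
      using Q_step_bound[OF M, of n] by (simp add: algebra_simps)
    also have "\<dots> \<le> int (M + 2) * S" using Sge by (intro mult_left_mono) auto
    finally show ?thesis .
  qed
  then have "real_of_int (Q (Suc (Suc n)) + Q (Suc n)) \<le> real_of_int (int (M + 2) * S)"
    by (simp only: of_int_le_iff)
  then have "real_of_int (Q (Suc (Suc n)) + Q (Suc n)) \<le> real (M + 2) * real_of_int S"
    by simp
  moreover have pA: "real_of_int (Q (Suc (Suc n)) + Q (Suc n)) > 0"
  proof -
    have "Q (Suc (Suc n)) + Q (Suc n) > 0" using Q_ge1[of n] Q_ge1[of "Suc n"] by linarith
    then show ?thesis by (simp only: of_int_0_less_iff)
  qed
  moreover have pB: "real (M + 2) * real_of_int S > 0" using S1 by simp
  ultimately have "1 / real_of_int (Q (Suc (Suc n)) + Q (Suc n)) \<ge> 1 / (real (M + 2) * real_of_int S)"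
    by (intro divide_left_mono) (auto intro: mult_pos_pos)
  then show ?thesis using F1 F2 by linarith
qed

lemma gap_index:
  fixes m :: nat
  assumes M: "\<And>k. a k \<le> M" and m: "m \<ge> M + 1"
  shows "\<exists>n. Q n + Q (Suc n) \<le> int m \<and> \<bar>d n\<bar> * real m < real (M + 2)"
proof -
  have ex: "\<exists>k. int m < Q (Suc k) + Q (Suc (Suc k))"
  proof -
    obtain k where "Q k > int m" using Q_unbounded by blast
    then show ?thesis using Q_ge0[of "Suc k"] Q_mono[of k] Q_mono[of "Suc k"]
      by (intro exI[of _ k]) linarith
  qed
  define N where "N = (LEAST k. int m < Q (Suc k) + Q (Suc (Suc k)))"
  have N1: "int m < Q (Suc N) + Q (Suc (Suc N))" unfolding N_def using ex by (rule LeastI_ex)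
  have "N \<noteq> 0"
  proof
    assume "N = 0"
    then have "int m < 1 + int (a 1)" using N1 by simp
    then show False using M[of 1] m by simp
  qed
  then obtain n where Nn: "N = Suc n" by (cases N) auto
  have "n < N" using Nn by simp
  then have "\<not> int m < Q (Suc n) + Q (Suc (Suc n))" unfolding N_def by (rule not_less_Least)
  then have le: "Q (Suc n) + Q (Suc (Suc n)) \<le> int m" by simp
  have "int m < Q (Suc (Suc n)) + Q (Suc (Suc (Suc n)))" using N1 Nn by simp
  also have "\<dots> \<le> int (M + 2) * Q (Suc (Suc n))"
    using Q_step_bound[OF M, of "Suc n"] by (simp add: algebra_simps)
  finally have "real_of_int (int m) < real_of_int (int (M + 2) * Q (Suc (Suc n)))"
    by (simp only: of_int_less_iff)
  then have "real m < real (M + 2) * real_of_int (Q (Suc (Suc n)))"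
    by simp
  moreover have "\<bar>d (Suc n)\<bar> * real_of_int (Q (Suc (Suc n))) \<le> 1"
    by (rule d_upper')
  ultimately have "\<bar>d (Suc n)\<bar> * real m < real (M + 2)"
  proof -
    assume h1: "real m < real (M + 2) * real_of_int (Q (Suc (Suc n)))"
      and h2: "\<bar>d (Suc n)\<bar> * real_of_int (Q (Suc (Suc n))) \<le> 1"
    have dpos: "\<bar>d (Suc n)\<bar> > 0" using d_nonzero by simp
    have s1: "\<bar>d (Suc n)\<bar> * real m < \<bar>d (Suc n)\<bar> * (real (M + 2) * real_of_int (Q (Suc (Suc n))))"
      using h1 dpos by simp
    have s2: "\<bar>d (Suc n)\<bar> * (real (M + 2) * real_of_int (Q (Suc (Suc n))))
        = real (M + 2) * (\<bar>d (Suc n)\<bar> * real_of_int (Q (Suc (Suc n))))" by simp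
    have s3: "real (M + 2) * (\<bar>d (Suc n)\<bar> * real_of_int (Q (Suc (Suc n)))) \<le> real (M + 2)"
      using mult_left_mono[OF h2, of "real (M + 2)"] by simp
    show ?thesis using s1 s2 s3 by linarith
  qed
  then show ?thesis using le by (intro exI[of _ "Suc n"]) simp
qed

end



locale iet = irr +
  fixes l :: real
  assumes lgt: "max e (1 - e) < l" and l1: "l < 1"
begin

lemma le: "e < l" and l1e: "1 - e < l" using lgt by auto

definition Rot :: "real \<Rightarrow> real" where "Rot z = (if z < e then z - e + 1 else z - e)"
abbreviation "T \<equiv> T3 e l"
abbreviation "cod \<equiv> coding e l"
definition stp :: "real \<Rightarrow> nat" where "stp z = (if Rot z < l then 1 else 2)"

primrec SS :: "real \<Rightarrow> nat \<Rightarrow> nat" where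
  "SS z 0 = 0" | "SS z (Suc k) = SS z k + stp ((T ^^ k) z)"

lemma Rot_range: "0 \<le> z \<Longrightarrow> z < 1 \<Longrightarrow> 0 \<le> Rot z \<and> Rot z < 1"
  using e0 e1 by (auto simp: Rot_def)

lemma Rotn_range: "0 \<le> z \<Longrightarrow> z < 1 \<Longrightarrow> 0 \<le> (Rot ^^ j) z \<and> (Rot ^^ j) z < 1"
  by (induction j) (auto simp: Rot_range)

lemma Rotn_int: "\<exists>k::int. (Rot ^^ j) z = z - real j * e + real_of_int k"
proof (induction j)
  case 0 then show ?case by (intro exI[of _ 0]) simp
next
  case (Suc j)
  then obtain k where k: "(Rot ^^ j) z = z - real j * e + real_of_int k" by blast
  show ?case
  proof (cases "(Rot ^^ j) z < e")
    case True
    then show ?thesis using k by (intro exI[of _ "k + 1"]) (simp add: Rot_def[of "(Rot ^^ j) z"] algebra_simps)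
  next
    case False
    then show ?thesis using k by (intro exI[of _ "k"]) (simp add: Rot_def[of "(Rot ^^ j) z"] algebra_simps)
  qed
qed

lemma T_Rot: "0 \<le> z \<Longrightarrow> z < l \<Longrightarrow> T z = (if Rot z < l then Rot z else Rot (Rot z))"
  using le l1e l1 e0 e1 by (auto simp: T3_def Rot_def)

lemma T_range: "0 \<le> z \<Longrightarrow> z < l \<Longrightarrow> 0 \<le> T z \<and> T z < l"
  using le l1e l1 e0 e1 by (auto simp: T3_def)

lemma Tn_range: "0 \<le> z \<Longrightarrow> z < l \<Longrightarrow> 0 \<le> (T ^^ k) z \<and> (T ^^ k) z < l"
  by (induction k) (auto simp: T_range)

lemma stp_ge1: "stp z \<ge> 1" and stp_le2: "stp z \<le> 2" by (auto simp: stp_def)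

lemma SS_ge: "SS z k \<ge> k"
proof (induction k)
  case 0 then show ?case by simp
next
  case (Suc k)
  have "stp ((T ^^ k) z) \<ge> 1" by (rule stp_ge1)
  then show ?case using Suc by simp
qed

lemma SS_le: "SS z k \<le> 2 * k"
proof (induction k)
  case 0 then show ?case by simp
next
  case (Suc k)
  have "stp ((T ^^ k) z) \<le> 2" by (rule stp_le2)
  then show ?case using Suc by simp
qed

lemma T_SS: "0 \<le> z \<Longrightarrow> z < l \<Longrightarrow> (T ^^ k) z = (Rot ^^ (SS z k)) z"
proof (induction k)
  case 0 then show ?case by simp
next
  case (Suc k)
  define w where "w = (T ^^ k) z"
  have w: "0 \<le> w" "w < l" using Tn_range[OF Suc.prems] w_def by auto
  have "(T ^^ Suc k) z = T w" by (simp add: w_def)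
  also have "\<dots> = (Rot ^^ stp w) w" using T_Rot[OF w] by (simp add: stp_def numeral_2_eq_2)
  also have "\<dots> = (Rot ^^ stp w) ((Rot ^^ SS z k) z)" using Suc by (simp add: w_def)
  also have "\<dots> = (Rot ^^ (stp w + SS z k)) z" by (simp add: funpow_add)
  also have "\<dots> = (Rot ^^ SS z (Suc k)) z" by (simp add: w_def add.commute)
  finally show ?case .
qed

lemma reach: "0 \<le> z \<Longrightarrow> z < l \<Longrightarrow> 0 \<le> (Rot ^^ j) z \<Longrightarrow> (Rot ^^ j) z < l
    \<Longrightarrow> \<exists>i. (T ^^ i) z = (Rot ^^ j) z"
proof (induction j arbitrary: z rule: less_induct)
  case (less j)
  show ?case
  proof (cases j)
    case 0 then show ?thesis by (intro exI[of _ 0]) simp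
  next
    case (Suc j1)
    have rz: "(Rot ^^ j) z = (Rot ^^ j1) (Rot z)" using Suc by (simp add: funpow_swap1)
    show ?thesis
    proof (cases "Rot z < l")
      case True
      have Tz: "T z = Rot z" using T_Rot[OF less.prems(1,2)] True by simp
      have r: "0 \<le> Rot z" using Rot_range less.prems l1 by simp
      obtain i where "(T ^^ i) (Rot z) = (Rot ^^ j1) (Rot z)"
        using less.IH[of j1 "Rot z"] Suc True r less.prems rz by auto
      then show ?thesis using rz Tz by (intro exI[of _ "Suc i"]) (simp add: funpow_swap1)
    next
      case False
      have Tz: "T z = Rot (Rot z)" using T_Rot[OF less.prems(1,2)] False by simp
      show ?thesis
      proof (cases j1)
        case 0
        then show ?thesis using False rz less.prems by simp
      next
        case (Suc j2)
        have rz2: "(Rot ^^ j) z = (Rot ^^ j2) (T z)" using rz Suc Tz by (simp add: funpow_swap1)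
        have r: "0 \<le> T z" "T z < l" using T_range less.prems by auto
        obtain i where "(T ^^ i) (T z) = (Rot ^^ j2) (T z)"
          using less.IH[of j2 "T z"] r rz2 less.prems \<open>j = Suc j1\<close> Suc by auto
        then show ?thesis using rz2 by (intro exI[of _ "Suc i"]) (simp add: funpow_swap1)
      qed
    qed
  qed
qed

lemma Rot_inj: "(Rot ^^ p1) z = (Rot ^^ p2) z \<Longrightarrow> p1 = p2"
proof (rule ccontr)
  assume eq: "(Rot ^^ p1) z = (Rot ^^ p2) z" and ne: "p1 \<noteq> p2"
  obtain ka where ka: "(Rot ^^ p1) z = z - real p1 * e + real_of_int ka" using Rotn_int by blast
  obtain kb where kb: "(Rot ^^ p2) z = z - real p2 * e + real_of_int kb" using Rotn_int by blast
  have "(real p1 - real p2) * e = real_of_int (ka - kb)" using eq ka kb by (simp add: algebra_simps)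
  moreover have "real p1 - real p2 \<noteq> 0" using ne by simp
  ultimately have "e = real_of_int (ka - kb) / (real p1 - real p2)" by (simp add: field_simps)
  also have "\<dots> \<in> \<rat>" by (intro Rats_divide) (auto simp: Rats_diff)
  finally show False using irr by simp
qed

lemma cod_B: "0 \<le> z \<Longrightarrow> z < l \<Longrightarrow> (Rot z < l \<longleftrightarrow> cod z \<noteq> B)"
  using le l1e l1 e0 e1 by (auto simp: coding_def Rot_def)

lemma cod_C: "0 \<le> z \<Longrightarrow> z < l \<Longrightarrow> (z < e \<longleftrightarrow> cod z \<noteq> C)"
  using le l1e l1 e0 e1 by (auto simp: coding_def)

lemma Rot_shift: "(z < e \<longleftrightarrow> z' < e) \<Longrightarrow> Rot z' = Rot z + (z' - z)"
  by (auto simp: Rot_def)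

lemma bridge1:
  assumes y: "0 \<le> y" "y < l" and y': "0 \<le> y'" "y' < l"
  shows "(\<forall>k<m. cod ((T ^^ k) y) = cod ((T ^^ k) y')) \<Longrightarrow> SS y' m = SS y m \<and>
     (\<forall>j \<le> SS y m. (Rot ^^ j) y' = (Rot ^^ j) y + (y' - y))"
proof (induction m)
  case 0 then show ?case by simp
next
  case (Suc m)
  then have IH: "SS y' m = SS y m" "\<And>j. j \<le> SS y m \<Longrightarrow> (Rot ^^ j) y' = (Rot ^^ j) y + (y' - y)"
    by auto
  define S where "S = SS y m"
  define w where "w = (T ^^ m) y"
  define w' where "w' = (T ^^ m) y'"
  have wS: "w = (Rot ^^ S) y" using T_SS[OF y] w_def S_def by simp
  have wS': "w' = (Rot ^^ S) y'" using T_SS[OF y'] w'_def S_def IH by simp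
  have ww: "w' = w + (y' - y)" using IH(2)[of S] wS wS' S_def by simp
  have wr: "0 \<le> w" "w < l" using Tn_range[OF y] w_def by auto
  have wr': "0 \<le> w'" "w' < l" using Tn_range[OF y'] w'_def by auto
  have cc: "cod w = cod w'" using Suc.prems w_def w'_def by auto
  have ce: "w < e \<longleftrightarrow> w' < e" using cod_C[OF wr] cod_C[OF wr'] cc by simp
  have cl: "Rot w < l \<longleftrightarrow> Rot w' < l" using cod_B[OF wr] cod_B[OF wr'] cc by simp
  have r1: "Rot w' = Rot w + (y' - y)" using Rot_shift[OF ce] ww by simp
  have st: "stp w = stp w'" using cl by (simp add: stp_def)
  have SSy: "SS y (Suc m) = S + stp w" using S_def w_def by simp
  have SSy': "SS y' (Suc m) = S + stp w" using S_def w'_def IH st by simp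
  have main: "(Rot ^^ j) y' = (Rot ^^ j) y + (y' - y)" if j: "j \<le> S + stp w" for j
  proof -
    have sw: "stp w = 1 \<or> stp w = 2" by (simp add: stp_def)
    then have "j \<le> S \<or> j = Suc S \<or> (j = Suc (Suc S) \<and> stp w = 2)" using j by arith
    then consider "j \<le> S" | "j = Suc S" | "j = Suc (Suc S)" "stp w = 2" by blast
    then show ?thesis
    proof cases
      case 1 then show ?thesis using IH S_def by simp
    next
      case 2 then show ?thesis using r1 wS wS' by simp
    next
      case 3
      then have "\<not> Rot w < l" by (simp add: stp_def split: if_splits)
      then have ge: "Rot w \<ge> e" "Rot w' \<ge> e" using cl le by auto
      have "(Rot ^^ j) y' = Rot (Rot w')" using 3 wS' by simp
      also have "\<dots> = Rot (Rot w) + (y' - y)" using ge r1 by (simp add: Rot_def)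
      also have "\<dots> = (Rot ^^ j) y + (y' - y)" using 3 wS by simp
      finally show ?thesis .
    qed
  qed
  show ?case using SSy SSy' main by simp
qed

definition sp :: "real \<Rightarrow> real \<Rightarrow> bool" where
  "sp z z' \<longleftrightarrow> 0 \<le> z' \<and> z' < 1 \<and> (z < l - 1 + e \<longleftrightarrow> z' < l - 1 + e) \<and>
     (z < e \<longleftrightarrow> z' < e) \<and> (z < l \<longleftrightarrow> z' < l)"

lemma bridge2:
  assumes y: "0 \<le> y" "y < l" and spN: "\<And>j. j \<le> N \<Longrightarrow> sp ((Rot ^^ j) y) ((Rot ^^ j) y + \<tau>)"
  shows "SS y k \<le> N \<Longrightarrow> (T ^^ k) (y + \<tau>) = (T ^^ k) y + \<tau>"
proof (induction k)
  case 0 then show ?case by simp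
next
  case (Suc k)
  define S where "S = SS y k"
  define w where "w = (T ^^ k) y"
  have SSk: "SS y (Suc k) = S + stp w" using S_def w_def by simp
  have SN: "S + stp w \<le> N" using Suc.prems SSk by simp
  then have "S \<le> N" by simp
  then have IH: "(T ^^ k) (y + \<tau>) = w + \<tau>" using Suc.IH w_def S_def by simp
  have wS: "w = (Rot ^^ S) y" using T_SS[OF y] w_def S_def by simp
  have wr: "0 \<le> w" "w < l" using Tn_range[OF y] w_def by auto
  have sp0: "sp w (w + \<tau>)" using spN[of S] \<open>S \<le> N\<close> wS by simp
  then have wr': "0 \<le> w + \<tau>" "w + \<tau> < l" using wr by (auto simp: sp_def)
  have ce: "w < e \<longleftrightarrow> w + \<tau> < e" using sp0 by (simp add: sp_def)
  have r1: "Rot (w + \<tau>) = Rot w + \<tau>" using Rot_shift[OF ce] by simp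
  have S1: "S + 1 \<le> N" using SN stp_ge1[of w] by simp
  have sp1: "sp (Rot w) (Rot w + \<tau>)" using spN[of "Suc S"] S1 wS by simp
  have cl: "Rot w < l \<longleftrightarrow> Rot w + \<tau> < l" using sp1 by (simp add: sp_def)
  have "T (w + \<tau>) = T w + \<tau>"
  proof (cases "Rot w < l")
    case True
    then show ?thesis using T_Rot[OF wr] T_Rot[OF wr'] r1 cl by simp
  next
    case False
    have ce1: "Rot w < e \<longleftrightarrow> Rot w + \<tau> < e" using sp1 by (simp add: sp_def)
    have "Rot (Rot w + \<tau>) = Rot (Rot w) + \<tau>" using Rot_shift[OF ce1] by simp
    then show ?thesis using T_Rot[OF wr] T_Rot[OF wr'] r1 cl False by simp
  qed
  then show ?case using IH w_def by simp
qed

lemma bridge2_cod: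
  assumes y: "0 \<le> y" "y < l" and spN: "\<And>j. j \<le> N \<Longrightarrow> sp ((Rot ^^ j) y) ((Rot ^^ j) y + \<tau>)"
    and k: "SS y k \<le> N"
  shows "cod ((T ^^ k) (y + \<tau>)) = cod ((T ^^ k) y)"
proof -
  define w where "w = (T ^^ k) y"
  have wS: "w = (Rot ^^ SS y k) y" using T_SS[OF y] w_def by simp
  have "sp w (w + \<tau>)" using spN[OF k] wS by simp
  moreover have "0 \<le> w" using Tn_range[OF y] w_def by auto
  ultimately have "cod (w + \<tau>) = cod w" by (auto simp: sp_def coding_def)
  then show ?thesis using bridge2[OF y spN k] w_def by simp
qed

lemma sp_fail:
  assumes z: "0 \<le> z" "z < 1" and ns: "\<not> sp z (z + \<tau>)"
  shows "\<exists>b \<in> {0, l - 1 + e, e, l, 1}. \<bar>z - b\<bar> \<le> \<bar>\<tau>\<bar>"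
proof -
  have "\<bar>z - 0\<bar> \<le> \<bar>\<tau>\<bar> \<or> \<bar>z - (l - 1 + e)\<bar> \<le> \<bar>\<tau>\<bar> \<or> \<bar>z - e\<bar> \<le> \<bar>\<tau>\<bar> \<or> \<bar>z - l\<bar> \<le> \<bar>\<tau>\<bar>
     \<or> \<bar>z - 1\<bar> \<le> \<bar>\<tau>\<bar>"
    using ns z unfolding sp_def by (auto simp: abs_if split: if_splits)
  then show ?thesis by auto
qed

lemma density:
  assumes x0: "0 \<le> x0" "x0 < l" and ep: "\<epsilon> > 0" and zb: "\<epsilon> \<le> z" "z + \<epsilon> \<le> l"
  shows "\<exists>i. \<bar>(T ^^ i) x0 - z\<bar> < \<epsilon>"
proof -
  obtain n where n: "\<bar>d n\<bar> < \<epsilon>" using d_small[OF ep] by blast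
  obtain j k where jk: "\<bar>real j * e - real_of_int k - (x0 - z)\<bar> < \<bar>d n\<bar>"
    using covering[of n "x0 - z"] by blast
  obtain kj where kj: "(Rot ^^ j) x0 = x0 - real j * e + real_of_int kj" using Rotn_int by blast
  define w where "w = x0 - real j * e + real_of_int k"
  have wz: "\<bar>w - z\<bar> < \<epsilon>" using jk n unfolding w_def by linarith
  have rr: "0 \<le> (Rot ^^ j) x0" "(Rot ^^ j) x0 < 1" using Rotn_range[of x0 j] x0 l1 by auto
  have wr: "0 < w" "w < l" using wz zb by linarith+
  have "w - (Rot ^^ j) x0 = real_of_int (k - kj)" using kj w_def by simp
  moreover have "\<bar>w - (Rot ^^ j) x0\<bar> < 1" using rr wr l1 by linarith
  ultimately have "\<bar>real_of_int (k - kj)\<bar> < 1" by simp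
  then have "k - kj = 0" by linarith
  then have wR: "w = (Rot ^^ j) x0" using kj w_def by simp
  obtain i where "(T ^^ i) x0 = (Rot ^^ j) x0" using reach[OF x0, of j] rr wr wR by auto
  then have "\<bar>(T ^^ i) x0 - z\<bar> < \<epsilon>" using wz wR by simp
  then show ?thesis by blast
qed

end



context iet
begin

lemma bnd:
  fixes x0 :: real
  assumes x0: "0 \<le> x0" "x0 < l" and M: "\<And>k. a k \<le> M" and q1: "q \<ge> 1" and qn: "q \<le> n"
    and per: "\<And>k. k + q < n \<Longrightarrow> cod ((T ^^ (i + k)) x0) = cod ((T ^^ (i + k + q)) x0)"
  shows "real n < (4 * (real M + 2)^2 + 1) * real q"
proof -
  define m where "m = n - q"
  define y where "y = (T ^^ i) x0"
  define y' where "y' = (T ^^ q) y"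
  have yr: "0 \<le> y" "y < l" using Tn_range[OF x0] y_def by auto
  have yr': "0 \<le> y'" "y' < l" using Tn_range[OF yr] y'_def by auto
  have codes: "\<forall>k<m. cod ((T ^^ k) y) = cod ((T ^^ k) y')"
  proof (intro allI impI)
    fix k assume "k < m"
    then have "k + q < n" using qn m_def by simp
    then have "cod ((T ^^ (i + k)) x0) = cod ((T ^^ (i + k + q)) x0)" by (rule per)
    moreover have "(T ^^ (i + k)) x0 = (T ^^ k) y" by (metis add.commute comp_apply funpow_add y_def)
    moreover have "(T ^^ (i + k + q)) x0 = (T ^^ k) y'"
    proof -
      have "i + k + q = k + (q + i)" by simp
      then show ?thesis by (simp only: funpow_add comp_apply y_def y'_def)
    qed
    ultimately show "cod ((T ^^ k) y) = cod ((T ^^ k) y')" by simp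
  qed
  have br: "\<And>j. j \<le> SS y m \<Longrightarrow> (Rot ^^ j) y' = (Rot ^^ j) y + (y' - y)"
    using bridge1[OF yr yr' codes] by auto
  define t where "t = y' - y"
  define Sq where "Sq = SS y q"
  have Sq1: "Sq \<ge> q" "Sq \<le> 2 * q" using SS_ge SS_le Sq_def by auto
  obtain K where K: "(Rot ^^ Sq) y = y - real Sq * e + real_of_int K" using Rotn_int by blast
  have y'S: "y' = (Rot ^^ Sq) y" using T_SS[OF yr] y'_def Sq_def by simp
  have tK: "t = real_of_int K - real Sq * e" using K y'S t_def by simp
  have Sqi: "int Sq \<ge> 1" using Sq1 q1 by simp
  have ba: "\<bar>real_of_int (int Sq) * e - real_of_int K\<bar> \<ge> 1 / (real (M + 2) * real_of_int (int Sq))"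
    by (rule bad_approx[OF M Sqi])
  have tb: "\<bar>t\<bar> * (real (M + 2) * real Sq) \<ge> 1"
  proof -
    have "\<bar>t\<bar> = \<bar>real_of_int (int Sq) * e - real_of_int K\<bar>" using tK by simp
    moreover have "real (M + 2) * real Sq > 0" using Sqi by simp
    ultimately show ?thesis using ba by (simp add: field_simps)
  qed
  have tb2: "\<bar>t\<bar> * (2 * (real M + 2) * real q) \<ge> 1"
  proof -
    have "real Sq \<le> 2 * real q" using Sq1 by simp
    then have "\<bar>t\<bar> * (real (M + 2) * real Sq) \<le> \<bar>t\<bar> * (real (M + 2) * (2 * real q))"
      by (intro mult_left_mono) auto
    then show ?thesis using tb by (simp add: algebra_simps)
  qed
  have mlt: "real m < 4 * (real M + 2)^2 * real q"
  proof (rule ccontr)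
    assume "\<not> ?thesis"
    then have mge: "real m \<ge> 4 * (real M + 2)^2 * real q" by simp
    have "4 * (real M + 2)^2 * real q \<ge> 4 * (real M + 2)^2 * 1" using q1 by simp
    moreover have "4 * (real M + 2)^2 \<ge> real M + 1" by (simp add: power2_eq_square algebra_simps)
    ultimately have "real m \<ge> real M + 1" using mge by linarith
    then have mM: "m \<ge> M + 1" by linarith
    obtain n' where n': "Q n' + Q (Suc n') \<le> int m" "\<bar>d n'\<bar> * real m < real (M + 2)"
      using gap_index[OF M mM] by blast
    have dsmall: "2 * \<bar>d n'\<bar> < \<bar>t\<bar>"
    proof -
      have A: "\<bar>d n'\<bar> * (4 * (real M + 2)^2 * real q) < real M + 2"
      proof -
        have "\<bar>d n'\<bar> * (4 * (real M + 2)^2 * real q) \<le> \<bar>d n'\<bar> * real m"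
          using mge by (intro mult_left_mono) auto
        then show ?thesis using n'(2) by simp
      qed
      have B: "\<bar>d n'\<bar> * (4 * (real M + 2) * real q) < 1"
      proof -
        have "(real M + 2) * (\<bar>d n'\<bar> * (4 * (real M + 2) * real q)) < (real M + 2) * 1"
          using A by (simp add: power2_eq_square algebra_simps)
        then show ?thesis by (simp add: mult_less_cancel_left)
      qed
      have "(2 * \<bar>d n'\<bar>) * (2 * (real M + 2) * real q) < 1" using B by (simp add: algebra_simps)
      also have "\<dots> \<le> \<bar>t\<bar> * (2 * (real M + 2) * real q)" using tb2 .
      finally show ?thesis using q1 by (simp add: mult_less_cancel_right)
    qed
    obtain j k where jk: "int j < Q n' + Q (Suc n')" "\<bar>real j * e - real_of_int k - (y + t / 2)\<bar> < \<bar>d n'\<bar>"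
      using covering[of n' "y + t / 2"] by blast
    have jm: "j \<le> SS y m" using jk(1) n'(1) SS_ge[of m y] by linarith
    obtain kj where kj: "(Rot ^^ j) y = y - real j * e + real_of_int kj" using Rotn_int by blast
    have A0: "0 \<le> (Rot ^^ j) y" "(Rot ^^ j) y < 1" using Rotn_range[of y j] yr l1 by auto
    have A1: "0 \<le> (Rot ^^ j) y + t" "(Rot ^^ j) y + t < 1"
      using Rotn_range[of y' j] yr' l1 br[OF jm] t_def by auto
    define z where "z = kj - k"
    have zz: "\<bar>(Rot ^^ j) y + t / 2 - real_of_int z\<bar> < \<bar>t\<bar> / 2"
    proof -
      have "(Rot ^^ j) y + t / 2 - real_of_int z = - (real j * e - real_of_int k - (y + t / 2))"
        using kj z_def by simp
      then have "\<bar>(Rot ^^ j) y + t / 2 - real_of_int z\<bar> = \<bar>real j * e - real_of_int k - (y + t / 2)\<bar>"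
        by (simp only: abs_minus_cancel)
      then show ?thesis using jk(2) dsmall by linarith
    qed
    show False
    proof (cases "t > 0")
      case True
      then have "real_of_int z > 0" "real_of_int z < 1" using zz A0 A1 by (auto simp: abs_if split: if_splits)
      then have "0 < z" "z < 1" by simp_all
      then show False by linarith
    next
      case False
      then have "real_of_int z > 0" "real_of_int z < 1" using zz A0 A1 by (auto simp: abs_if split: if_splits)
      then have "0 < z" "z < 1" by simp_all
      then show False by linarith
    qed
  qed
  have "real n = real q + real m" using qn m_def by simp
  then show ?thesis using mlt by (simp add: algebra_simps)
qed

lemma unb:
  fixes x0 :: real
  assumes x0: "0 \<le> x0" "x0 < l" and R1: "R \<ge> 1" and big: "real (a m0) > 180 * real R"
  shows "\<exists>i q L. 1 \<le> q \<and> q \<le> L \<and> real (R + 1) * real q \<le> real L \<and>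
     (\<forall>k. k + q < L \<longrightarrow> cod ((T ^^ (i + k)) x0) = cod ((T ^^ (i + k + q)) x0))"
proof -
  have "m0 \<noteq> 0" using big a0 by (cases m0) auto
  then obtain m where m0: "m0 = Suc m" by (cases m0) auto
  define s where "s = Q (Suc m)"
  have s1: "s \<ge> 1" using Q_ge1 s_def by simp
  define sn where "sn = nat s"
  have sn: "real sn = real_of_int s" "sn \<ge> 1" using s1 sn_def by auto
  define \<tau> where "\<tau> = - d (Suc m)"
  define \<rho> where "\<rho> = \<bar>\<tau>\<bar>"
  have \<rho>0: "\<rho> > 0" using d_nonzero \<rho>_def \<tau>_def by simp
  have du: "\<rho> * real (a m0) * real sn \<le> 1" using d_unb[of m] \<rho>_def \<tau>_def m0 sn s_def by simp
  have Rpos: "real R \<ge> 1" using R1 by simp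
  have \<rho>sR: "\<rho> * real sn * real R < 1 / 180"
  proof -
    have "\<rho> * real sn > 0" using \<rho>0 sn by simp
    then have "(\<rho> * real sn) * (180 * real R) < (\<rho> * real sn) * real (a m0)"
      using big by (intro mult_strict_left_mono) auto
    then show ?thesis using du by (simp add: algebra_simps)
  qed
  have \<rho>1: "\<rho> < 1"
  proof -
    have "real sn * real R \<ge> 1 * 1" using sn Rpos by (intro mult_mono) auto
    then have "\<rho> * 1 \<le> \<rho> * (real sn * real R)" using \<rho>0 by (intro mult_left_mono) auto
    then have "\<rho> \<le> \<rho> * real sn * real R" by (simp add: mult.assoc)
    then show ?thesis using \<rho>sR by linarith
  qed
  define N where "N = 2 * R * sn"
  define bl where "bl = [0, l - 1 + e, e, l, 1::real]"
  define I where "I = {0..N} \<times> (set bl \<times> {-1, 0, 1::int})"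
  define c where "c = (\<lambda>(j::nat, b::real, K::int). frac (real j * e + b) + real_of_int K)"
  define Bad where "Bad = (\<Union>x\<in>I. {c x - \<rho> .. c x + \<rho>})"
  have finI: "finite I" unfolding I_def by simp
  have cardI: "card I \<le> (N + 1) * 15"
  proof -
    have eq: "card I = (N + 1) * (card (set bl) * 3)" unfolding I_def by (simp add: card_cartesian_product)
    have "card (set bl) \<le> 5" using card_length[of bl] bl_def by simp
    then have h: "card (set bl) * 3 \<le> 15" by simp
    show ?thesis unfolding eq by (rule mult_le_mono2[OF h])
  qed
  have compB: "compact Bad" unfolding Bad_def using finI by auto
  have measB: "measure lborel Bad \<le> real (card I) * (2 * \<rho>)"
  proof -
    have "measure lborel Bad \<le> (\<Sum>x\<in>I. measure lborel {c x - \<rho> .. c x + \<rho>})"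
      unfolding Bad_def by (rule measure_UNION_le[OF finI]) auto
    also have "\<dots> = (\<Sum>x\<in>I. 2 * \<rho>)" using \<rho>0 by simp
    finally show ?thesis by simp
  qed
  have measB2: "measure lborel Bad < l"
  proof -
    have "real (card I) \<le> real ((N + 1) * 15)" using cardI by (simp only: of_nat_le_iff)
    then have "real (card I) \<le> (real N + 1) * 15" by simp
    then have "real (card I) * (2 * \<rho>) \<le> (real N + 1) * 15 * (2 * \<rho>)"
      using \<rho>0 by (intro mult_right_mono) auto
    moreover have "real N + 1 \<le> 3 * real R * real sn"
    proof -
      have "real R * real sn \<ge> 1 * 1" using Rpos sn by (intro mult_mono) auto
      then show ?thesis using N_def by simp
    qed
    then have "(real N + 1) * 15 * (2 * \<rho>) \<le> (3 * real R * real sn) * 15 * (2 * \<rho>)"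
      using \<rho>0 by (intro mult_right_mono) auto
    moreover have "(3 * real R * real sn) * 15 * (2 * \<rho>) = 90 * (\<rho> * real sn * real R)"
      by (simp add: algebra_simps)
    moreover have "90 * (\<rho> * real sn * real R) < 1 / 2" using \<rho>sR by simp
    moreover have "l > 1 / 2" using lgt by auto
    ultimately show ?thesis using measB by linarith
  qed
  have "\<exists>z. z \<in> {0<..<l} - Bad"
  proof (rule ccontr)
    assume "\<not> ?thesis"
    then have sub: "{0<..<l} \<subseteq> Bad" by auto
    have "measure lborel {0<..<l} \<le> measure lborel Bad"
      by (rule measure_mono_fmeasurable[OF sub]) (auto intro: fmeasurable_compact[OF compB])
    then show False using measB2 le e0 by simp
  qed
  then obtain z where z: "z \<in> {0<..<l} - Bad" by blast
  have "open ({0<..<l} - Bad)" using compB by (intro open_Diff compact_imp_closed) auto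
  then obtain \<epsilon> where \<epsilon>: "\<epsilon> > 0" "ball z \<epsilon> \<subseteq> {0<..<l} - Bad"
    using z open_contains_ball by blast
  define \<epsilon>' where "\<epsilon>' = min \<epsilon> (min z (l - z))"
  have \<epsilon>': "\<epsilon>' > 0" "\<epsilon>' \<le> z" "z + \<epsilon>' \<le> l" "\<epsilon>' \<le> \<epsilon>" using \<epsilon> z \<epsilon>'_def by auto
  obtain i where i: "\<bar>(T ^^ i) x0 - z\<bar> < \<epsilon>'" using density[OF x0 \<epsilon>'(1-3)] by blast
  define y where "y = (T ^^ i) x0"
  have yr: "0 \<le> y" "y < l" using Tn_range[OF x0] y_def by auto
  have yB: "y \<notin> Bad"
  proof -
    have "y \<in> ball z \<epsilon>" using i \<epsilon>' y_def by (simp add: dist_real_def abs_minus_commute)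
    then show ?thesis using \<epsilon> by auto
  qed
  have spN: "sp ((Rot ^^ j) y) ((Rot ^^ j) y + \<tau>)" if j: "j \<le> N" for j
  proof (rule ccontr)
    assume ns: "\<not> ?thesis"
    have rr: "0 \<le> (Rot ^^ j) y" "(Rot ^^ j) y < 1" using Rotn_range[of y j] yr l1 by auto
    obtain b where b: "b \<in> {0, l - 1 + e, e, l, 1}" "\<bar>(Rot ^^ j) y - b\<bar> \<le> \<bar>\<tau>\<bar>"
      using sp_fail[OF rr ns] by blast
    obtain kj where kj: "(Rot ^^ j) y = y - real j * e + real_of_int kj" using Rotn_int by blast
    define K where "K = \<lfloor>real j * e + b\<rfloor> - kj"
    have yc: "y - c (j, b, K) = (Rot ^^ j) y - b"
      using kj by (simp add: c_def K_def frac_def)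
    have yc2: "\<bar>y - c (j, b, K)\<bar> \<le> \<rho>" using yc b \<rho>_def by simp
    have fr: "0 \<le> frac (real j * e + b)" "frac (real j * e + b) < 1" by (auto simp: frac_lt_1)
    have "\<bar>y - frac (real j * e + b) - real_of_int K\<bar> \<le> \<rho>" using yc2 by (simp add: c_def)
    then have "real_of_int K > -2" "real_of_int K < 2" using fr yr l1 \<rho>1 by linarith+
    then have "K > -2" "K < 2" by linarith+
    then have K3: "K \<in> {-1, 0, 1}" by auto
    have "(j, b, K) \<in> I" using j b(1) K3 unfolding I_def bl_def by auto
    moreover have "y \<in> {c (j, b, K) - \<rho> .. c (j, b, K) + \<rho>}" using yc2 by (auto simp: abs_le_iff)
    ultimately have "y \<in> Bad" unfolding Bad_def by blast
    then show False using yB by simp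
  qed
  have sp0: "sp y (y + \<tau>)" using spN[of 0] by simp
  then have yt: "0 \<le> y + \<tau>" "y + \<tau> < l" using yr by (auto simp: sp_def)
  obtain K1 where K1: "(Rot ^^ sn) y = y - real sn * e + real_of_int K1" using Rotn_int by blast
  have rs: "0 \<le> (Rot ^^ sn) y" "(Rot ^^ sn) y < 1" using Rotn_range[of y sn] yr l1 by auto
  have "(Rot ^^ sn) y - (y + \<tau>) = real_of_int (K1 - P (Suc m))"
    using K1 sn by (simp add: \<tau>_def d_def s_def)
  moreover have "\<bar>(Rot ^^ sn) y - (y + \<tau>)\<bar> < 1" using rs yt l1 by linarith
  ultimately have "\<bar>real_of_int (K1 - P (Suc m))\<bar> < 1" by simp
  then have "K1 - P (Suc m) = 0" by linarith
  then have Rs: "(Rot ^^ sn) y = y + \<tau>" using K1 sn by (simp add: \<tau>_def d_def s_def)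
  obtain q where q: "(T ^^ q) y = (Rot ^^ sn) y" using reach[OF yr, of sn] Rs yt by auto
  have "(Rot ^^ SS y q) y = (Rot ^^ sn) y" using q T_SS[OF yr] by simp
  then have "SS y q = sn" by (rule Rot_inj)
  then have qs: "q \<le> sn" using SS_ge[of q y] by simp
  have q1: "q \<ge> 1"
  proof (rule ccontr)
    assume "\<not> q \<ge> 1"
    then have "q = 0" by simp
    then have "\<tau> = 0" using q Rs by simp
    then show False using \<rho>0 \<rho>_def by simp
  qed
  define L where "L = q + R * sn + 1"
  have per: "cod ((T ^^ (i + k)) x0) = cod ((T ^^ (i + k + q)) x0)" if k: "k + q < L" for k
  proof -
    have "SS y k \<le> N" using SS_le[of y k] k L_def N_def by simp
    then have "cod ((T ^^ k) (y + \<tau>)) = cod ((T ^^ k) y)"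
      using bridge2_cod[where N=N and \<tau>=\<tau> and k=k, OF yr spN] by blast
    moreover have "(T ^^ (i + k)) x0 = (T ^^ k) y" by (metis add.commute comp_apply funpow_add y_def)
    moreover have "(T ^^ (i + k + q)) x0 = (T ^^ k) (y + \<tau>)"
    proof -
      have "i + k + q = k + (q + i)" by simp
      then have "(T ^^ (i + k + q)) x0 = (T ^^ k) ((T ^^ q) y)"
        by (simp only: funpow_add comp_apply y_def)
      then show ?thesis using q Rs by simp
    qed
    ultimately show ?thesis by simp
  qed
  have "real (R + 1) * real q \<le> real L"
  proof -
    have h: "R * q \<le> R * sn" by (rule mult_le_mono2[OF qs])
    have "(R + 1) * q = R * q + q" by simp
    then have "(R + 1) * q \<le> L" using h L_def by linarith
    then have "real ((R + 1) * q) \<le> real L" by (simp only: of_nat_le_iff)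
    then show ?thesis by (simp add: algebra_simps)
  qed
  then show ?thesis using q1 per L_def by (intro exI[of _ i] exI[of _ q] exI[of _ L]) auto
qed

end



lemma index_le:
  fixes u :: "nat \<Rightarrow> 'a" and C :: real
  assumes H: "\<And>i q n. 1 \<le> q \<Longrightarrow> q \<le> n \<Longrightarrow> (\<And>k. k + q < n \<Longrightarrow> u (i + k) = u (i + k + q))
      \<Longrightarrow> real n \<le> C * real q"
  shows "index u \<le> ereal C"
  unfolding index_def
proof (rule Sup_least)
  fix x assume "x \<in> {word_index w u |w. w \<noteq> [] \<and> is_factor w u}"
  then obtain w where w: "x = word_index w u" "w \<noteq> []" by blast
  show "x \<le> ereal C" unfolding w(1) word_index_def
  proof (rule Sup_least)
    fix z assume "z \<in> {ereal (real (length v) / real (length w)) |v. is_power_of v w \<and> is_factor v u}"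
    then obtain v where v: "z = ereal (real (length v) / real (length w))" "is_power_of v w" "is_factor v u"
      by blast
    obtain i where i: "v = map u [i..<i + length v]" using v(3) by (auto simp: is_factor_def)
    define q where "q = length w"
    define n where "n = length v"
    have q1: "1 \<le> q" using w(2) q_def by (cases w) auto
    have qn: "q \<le> n" using v(2) q_def n_def by (simp add: is_power_of_def)
    have pw: "\<And>k. k < n \<Longrightarrow> v ! k = w ! (k mod q)" using v(2) q_def n_def by (simp add: is_power_of_def)
    have vu: "\<And>k. k < n \<Longrightarrow> v ! k = u (i + k)" using i n_def by (metis add_diff_cancel_left' nth_map_upt)
    have per: "u (i + k) = u (i + k + q)" if k: "k + q < n" for k
    proof -
      have "u (i + k) = v ! k" using vu k by simp
      also have "\<dots> = w ! (k mod q)" using pw k by simp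
      also have "\<dots> = w ! ((k + q) mod q)" by simp
      also have "\<dots> = v ! (k + q)" using pw k by simp
      also have "\<dots> = u (i + (k + q))" using vu k by simp
      finally show ?thesis by (simp add: add.assoc)
    qed
    have "real n \<le> C * real q" using H[OF q1 qn per] by blast
    moreover have "real q > 0" using q1 by simp
    ultimately have "real n / real q \<le> C" by (simp add: divide_le_eq)
    then show "z \<le> ereal C" using v(1) q_def n_def by simp
  qed
qed

lemma index_ge:
  fixes u :: "nat \<Rightarrow> 'a"
  assumes q1: "1 \<le> q" and qL: "q \<le> L" and per: "\<And>k. k + q < L \<Longrightarrow> u (i + k) = u (i + k + q)"
  shows "ereal (real L / real q) \<le> index u"
proof -
  have pm: "k < L \<Longrightarrow> u (i + k) = u (i + k mod q)" for k
  proof (induction k rule: less_induct)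
    case (less k)
    show ?case
    proof (cases "k < q")
      case True then show ?thesis by simp
    next
      case False
      then obtain k' where k': "k = k' + q" by (metis add.commute le_add_diff_inverse not_less)
      then have "u (i + k) = u (i + k')" using per[of k'] less.prems by (simp add: add.assoc)
      also have "\<dots> = u (i + k' mod q)" using less.IH[of k'] k' less.prems q1 by simp
      also have "k' mod q = k mod q" using k' by simp
      finally show ?thesis .
    qed
  qed
  define w where "w = map u [i..<i + q]"
  define v where "v = map u [i..<i + L]"
  have lw: "length w = q" and lv: "length v = L" by (simp_all add: w_def v_def)
  have wne: "w \<noteq> []" using lw q1 by auto
  have pow: "is_power_of v w"
    unfolding is_power_of_def
  proof (intro conjI allI impI)
    show "w \<noteq> []" by (rule wne)
    show "length w \<le> length v" using lw lv qL by simp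
    fix k assume k: "k < length v"
    have "v ! k = u (i + k)" using k lv by (simp add: v_def)
    also have "\<dots> = u (i + k mod q)" using pm k lv by simp
    also have "\<dots> = w ! (k mod length w)" using lw q1 by (simp add: w_def)
    finally show "v ! k = w ! (k mod length w)" .
  qed
  have fv: "is_factor v u" unfolding is_factor_def using lv by (intro exI[of _ i]) (simp add: v_def)
  have fw: "is_factor w u" unfolding is_factor_def using lw by (intro exI[of _ i]) (simp add: w_def)
  have "ereal (real L / real q) \<le> word_index w u"
    unfolding word_index_def using pow fv lv lw by (intro Sup_upper) auto
  also have "word_index w u \<le> index u"
    unfolding index_def using wne fw by (intro Sup_upper) auto
  finally show ?thesis .
qed

theorem theorem4:
  fixes eps l x0 :: real
  assumes "0 < eps" "eps < 1" "eps \<notin> \<rat>"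
    and "max eps (1 - eps) < l" "l < 1"
    and "0 \<le> x0" "x0 < l"
  shows "index (iet3_word eps l x0) < \<infinity> \<longleftrightarrow> bdd_above (range (cf_digit eps))"
proof -
  interpret iet eps l
    using assms by unfold_locales auto
  define u where "u = iet3_word eps l x0"
  have u: "\<And>n. u n = cod ((T ^^ n) x0)" by (simp add: u_def iet3_word_def)
  have x0: "0 \<le> x0" "x0 < l" using assms by auto
  show ?thesis
  proof
    assume fin: "index (iet3_word eps l x0) < \<infinity>"
    show "bdd_above (range a)"
    proof (rule ccontr)
      assume nb: "\<not> bdd_above (range a)"
      have "index u \<noteq> \<infinity>" using fin u_def by simp
      moreover have "index u \<noteq> - \<infinity>"
      proof -
        have "ereal (real 1 / real 1) \<le> index u"
          by (rule index_ge[where q=1 and L=1 and i=0 and u=u]) auto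
        then show ?thesis by auto
      qed
      ultimately obtain B where B: "index u = ereal B" by (cases "index u") auto
      define R where "R = nat \<lceil>B\<rceil> + 1"
      have R1: "R \<ge> 1" using R_def by simp
      obtain m0 where m0: "a m0 > 180 * R"
      proof (rule ccontr)
        assume "\<not> thesis"
        then have "\<forall>k. a k \<le> 180 * R" using that by (meson not_le)
        then have "bdd_above (range a)" by (auto intro: bdd_aboveI2)
        then show False using nb by simp
      qed
      then have m0r: "real (a m0) > 180 * real R" by (metis of_nat_less_iff of_nat_mult of_nat_numeral)
      obtain i q L where iqL: "1 \<le> q" "q \<le> L" "real (R + 1) * real q \<le> real L"
        "\<And>k. k + q < L \<Longrightarrow> cod ((T ^^ (i + k)) x0) = cod ((T ^^ (i + k + q)) x0)"
        using unb[OF x0 R1 m0r] by blast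
      have "ereal (real L / real q) \<le> index u"
        using index_ge[where q=q and L=L and u=u and i=i] iqL u by (simp add: add.assoc)
      then have le: "real L / real q \<le> B" using B by simp
      have "real L / real q \<ge> real (R + 1)" using iqL(1,3) by (simp add: le_divide_eq)
      moreover have "real (R + 1) > B" using R_def by linarith
      ultimately show False using le by linarith
    qed
  next
    assume "bdd_above (range a)"
    then obtain M where M: "\<And>k. a k \<le> M" by (auto simp: bdd_above_def)
    have "index u \<le> ereal (4 * (real M + 2)^2 + 1)"
    proof (rule index_le)
      fix i q n assume q1: "1 \<le> q" and qn: "q \<le> n"
        and per: "\<And>k. k + q < n \<Longrightarrow> u (i + k) = u (i + k + q)"
      have per': "cod ((T ^^ (i + k)) x0) = cod ((T ^^ (i + k + q)) x0)" if "k + q < n" for k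
        using per[OF that] u by simp
      have "real n < (4 * (real M + 2)^2 + 1) * real q"
        by (rule bnd[OF x0 M q1 qn per'])
      then show "real n \<le> (4 * (real M + 2)^2 + 1) * real q" by simp
    qed
    then show "index (iet3_word eps l x0) < \<infinity>" using u_def by auto
  qed
qed


end
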